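(* Let $n\ge0$ and let \[\begin{array}{ccc} G&\to&H\\ \downarrow&&\downarrow\\ K&\to&L\end{array}\] be a commutative square of graphs such that (1) every morphism in the square is a monomorphism; (2) the square is a pullback in $\mathsf{Graph}$; and (3) every graph map $I_1^{\square n}\to L$ factors through $H\to L$ or through $K\to L$. Then this square is an $n$-skeletal pushout.
   Context: A graph is a set with a reflexive symmetric relation (edges); graph maps preserve the relation; $\mathsf{Graph}$ is their category. $I_1$ is the graph with two vertices joined by an edge, and $I_1^{\square n}$ is its $n$-fold box product, where the box product $G\square H$ has vertex set $V(G)\times V(H)$ and $(v,w)\sim(v',w')$ iff ($v=v'$, $w\sim w'$) or ($v\sim v'$, $w=w'$). The $1$-nerve $N_1G$ is the cubical set (presheaf on the box category with faces, degeneracies and connections) whose $k$-cubes are graph maps $I_1^{\square k}\to G$, with structure maps induced by the corresponding maps $I_1^{\square k}\to I_1^{\square j}$. $\operatorname{sk}^n$ of a cubical set is the subobject generated by cubes of dimension $\le n$. A commutative square of graphs is an $n$-skeletal pushout if applying $\operatorname{sk}^n\circ N_1$ yields a pushout square of cubical sets. *)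

theory Defs
  imports Main "HOL-Library.FuncSet"
begin

type_synonym 'a graph = "'a set \<times> ('a \<Rightarrow> 'a \<Rightarrow> bool)"

definition gverts :: "'a graph \<Rightarrow> 'a set" where "gverts G = fst G"
definition gedge :: "'a graph \<Rightarrow> 'a \<Rightarrow> 'a \<Rightarrow> bool" where "gedge G = snd G"

definition is_graph :: "'a graph \<Rightarrow> bool" where
  "is_graph G \<longleftrightarrow>
     (\<forall>x\<in>gverts G. gedge G x x) \<and>
     (\<forall>x y. gedge G x y \<longrightarrow> gedge G y x) \<and>
     (\<forall>x y. gedge G x y \<longrightarrow> x \<in> gverts G \<and> y \<in> gverts G)"

definition graph_map :: "'a graph \<Rightarrow> 'b graph \<Rightarrow> ('a \<Rightarrow> 'b) \<Rightarrow> bool" where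
  "graph_map G H f \<longleftrightarrow>
     (\<forall>x\<in>gverts G. f x \<in> gverts H) \<and>
     (\<forall>x\<in>gverts G. \<forall>y\<in>gverts G. gedge G x y \<longrightarrow> gedge H (f x) (f y))"

definition graph_mono :: "'a graph \<Rightarrow> 'b graph \<Rightarrow> ('a \<Rightarrow> 'b) \<Rightarrow> bool" where
  "graph_mono G H f \<longleftrightarrow> graph_map G H f \<and> inj_on f (gverts G)"

definition box_prod :: "'a graph \<Rightarrow> 'b graph \<Rightarrow> ('a \<times> 'b) graph" where
  "box_prod G H = (gverts G \<times> gverts H,
     \<lambda>(v, w) (v', w'). (v = v' \<and> v \<in> gverts G \<and> gedge H w w') \<or>
                       (gedge G v v' \<and> w = w' \<and> w \<in> gverts H))"

definition I1 :: "bool graph" where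
  "I1 = (UNIV, \<lambda>x y. True)"

text \<open>The n-fold box product of I_1, realised on bool lists of length n:
  I_1^(box 0) is the one-vertex graph (unit of the box product) and
  I_1^(box (k+1)) = I_1 box I_1^(box k), transported along (b, xs) to b # xs.\<close>
fun cube :: "nat \<Rightarrow> bool list graph" where
  "cube 0 = ({[]}, \<lambda>x y. x = [] \<and> y = [])"
| "cube (Suc k) =
     (let P = box_prod I1 (cube k) in
       ((\<lambda>(b, xs). b # xs) ` gverts P,
        \<lambda>u v. u \<noteq> [] \<and> v \<noteq> [] \<and> gedge P (hd u, tl u) (hd v, tl v)))"

abbreviation cv :: "nat \<Rightarrow> bool list set" where "cv k \<equiv> gverts (cube k)"

definition face :: "nat \<Rightarrow> bool \<Rightarrow> bool list \<Rightarrow> bool list" where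
  "face i e xs = take i xs @ [e] @ drop i xs"            \<comment> \<open>[1]^k \<rightarrow> [1]^(k+1), i \<le> k\<close>

definition degen :: "nat \<Rightarrow> bool list \<Rightarrow> bool list" where
  "degen i xs = take i xs @ drop (Suc i) xs"             \<comment> \<open>[1]^(k+1) \<rightarrow> [1]^k, i \<le> k\<close>

definition conn :: "nat \<Rightarrow> bool \<Rightarrow> bool list \<Rightarrow> bool list" where
  "conn i e xs = take i xs @
     [if e then (xs ! i \<or> xs ! Suc i) else (xs ! i \<and> xs ! Suc i)] @ drop (i + 2) xs"
                                                        \<comment> \<open>[1]^(k+2) \<rightarrow> [1]^(k+1), i \<le> k\<close>

inductive box_mor0 :: "nat \<Rightarrow> nat \<Rightarrow> (bool list \<Rightarrow> bool list) \<Rightarrow> bool" where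
  idm: "box_mor0 k k (\<lambda>x. x)"
| facem: "box_mor0 k m f \<Longrightarrow> i \<le> m \<Longrightarrow> box_mor0 k (Suc m) (face i e \<circ> f)"
| degenm: "box_mor0 k (Suc m) f \<Longrightarrow> i \<le> m \<Longrightarrow> box_mor0 k m (degen i \<circ> f)"
| connm: "box_mor0 k (Suc (Suc m)) f \<Longrightarrow> i \<le> m \<Longrightarrow> box_mor0 k (Suc m) (conn i e \<circ> f)"

text \<open>Morphisms [1]^k \<rightarrow> [1]^m of the box category, as (extensional) maps of
  vertex sets of cubes.\<close>
definition boxhom :: "nat \<Rightarrow> nat \<Rightarrow> (bool list \<Rightarrow> bool list) set" where
  "boxhom k m = {restrict f (cv k) | f. box_mor0 k m f}"

text \<open>A cubical set on carrier type 'x: sets of k-cubes for each k and an action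
  act k m f : X_m \<rightarrow> X_k for every box morphism f : [1]^k \<rightarrow> [1]^m.\<close>
type_synonym 'x cset = "(nat \<Rightarrow> 'x set) \<times> (nat \<Rightarrow> nat \<Rightarrow> (bool list \<Rightarrow> bool list) \<Rightarrow> 'x \<Rightarrow> 'x)"

definition cells :: "'x cset \<Rightarrow> nat \<Rightarrow> 'x set" where "cells X = fst X"
definition act :: "'x cset \<Rightarrow> nat \<Rightarrow> nat \<Rightarrow> (bool list \<Rightarrow> bool list) \<Rightarrow> 'x \<Rightarrow> 'x" where
  "act X = snd X"

definition cubical_set :: "'x cset \<Rightarrow> bool" where
  "cubical_set X \<longleftrightarrow>
     (\<forall>k m f x. f \<in> boxhom k m \<longrightarrow> x \<in> cells X m \<longrightarrow> act X k m f x \<in> cells X k) \<and>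
     (\<forall>k. \<forall>x\<in>cells X k. act X k k (restrict (\<lambda>y. y) (cv k)) x = x) \<and>
     (\<forall>k m p f g x. f \<in> boxhom k m \<longrightarrow> g \<in> boxhom m p \<longrightarrow> x \<in> cells X p \<longrightarrow>
        act X k p (restrict (g \<circ> f) (cv k)) x = act X k m f (act X m p g x))"

definition cset_mor :: "'x cset \<Rightarrow> 'y cset \<Rightarrow> (nat \<Rightarrow> 'x \<Rightarrow> 'y) \<Rightarrow> bool" where
  "cset_mor X Y \<alpha> \<longleftrightarrow>
     (\<forall>k. \<forall>x\<in>cells X k. \<alpha> k x \<in> cells Y k) \<and>
     (\<forall>k m f x. f \<in> boxhom k m \<longrightarrow> x \<in> cells X m \<longrightarrow>
        \<alpha> k (act X k m f x) = act Y k m f (\<alpha> m x))"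

definition sub_cset :: "'x cset \<Rightarrow> (nat \<Rightarrow> 'x set) \<Rightarrow> bool" where
  "sub_cset X S \<longleftrightarrow>
     (\<forall>k. S k \<subseteq> cells X k) \<and>
     (\<forall>k m f x. f \<in> boxhom k m \<longrightarrow> x \<in> S m \<longrightarrow> act X k m f x \<in> S k)"

definition sk :: "nat \<Rightarrow> 'x cset \<Rightarrow> 'x cset" where
  "sk n X = (\<lambda>k. \<Inter> {S k | S. sub_cset X S \<and> (\<forall>m\<le>n. cells X m \<subseteq> S m)}, act X)"

definition nerve1 :: "'a graph \<Rightarrow> (bool list \<Rightarrow> 'a) cset" where
  "nerve1 G = (\<lambda>k. {c. c \<in> extensional (cv k) \<and> graph_map (cube k) G c},
               \<lambda>k m f c. restrict (c \<circ> f) (cv k))"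

definition nerve1_map :: "('a \<Rightarrow> 'b) \<Rightarrow> nat \<Rightarrow> (bool list \<Rightarrow> 'a) \<Rightarrow> (bool list \<Rightarrow> 'b)" where
  "nerve1_map \<phi> k c = restrict (\<phi> \<circ> c) (cv k)"

text \<open>A commutative square A \<rightarrow> B, A \<rightarrow> C, B \<rightarrow> D, C \<rightarrow> D of cubical sets is a
  pushout: universal property against every cubical set X on carrier type 'x.\<close>
definition cset_pushout ::
  "'a cset \<Rightarrow> 'b cset \<Rightarrow> 'c cset \<Rightarrow> 'd cset \<Rightarrow>
   (nat \<Rightarrow> 'a \<Rightarrow> 'b) \<Rightarrow> (nat \<Rightarrow> 'a \<Rightarrow> 'c) \<Rightarrow> (nat \<Rightarrow> 'b \<Rightarrow> 'd) \<Rightarrow> (nat \<Rightarrow> 'c \<Rightarrow> 'd) \<Rightarrow>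
   'x itself \<Rightarrow> bool" where
  "cset_pushout A B C D f g h k (_ :: 'x itself) \<longleftrightarrow>
     cset_mor A B f \<and> cset_mor A C g \<and> cset_mor B D h \<and> cset_mor C D k \<and>
     (\<forall>j. \<forall>a\<in>cells A j. h j (f j a) = k j (g j a)) \<and>
     (\<forall>(X :: 'x cset) u v.
        cubical_set X \<longrightarrow> cset_mor B X u \<longrightarrow> cset_mor C X v \<longrightarrow>
        (\<forall>j. \<forall>a\<in>cells A j. u j (f j a) = v j (g j a)) \<longrightarrow>
        (\<exists>w. cset_mor D X w \<and>
              (\<forall>j. \<forall>b\<in>cells B j. w j (h j b) = u j b) \<and>
              (\<forall>j. \<forall>c\<in>cells C j. w j (k j c) = v j c) \<and>
              (\<forall>w'. cset_mor D X w' \<longrightarrow>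
                    (\<forall>j. \<forall>b\<in>cells B j. w' j (h j b) = u j b) \<longrightarrow>
                    (\<forall>j. \<forall>c\<in>cells C j. w' j (k j c) = v j c) \<longrightarrow>
                    (\<forall>j. \<forall>d\<in>cells D j. w' j d = w j d))))"

definition skeletal_pushout ::
  "nat \<Rightarrow> 'g graph \<Rightarrow> 'h graph \<Rightarrow> 'k graph \<Rightarrow> 'l graph \<Rightarrow>
   ('g \<Rightarrow> 'h) \<Rightarrow> ('g \<Rightarrow> 'k) \<Rightarrow> ('h \<Rightarrow> 'l) \<Rightarrow> ('k \<Rightarrow> 'l) \<Rightarrow> 'x itself \<Rightarrow> bool" where
  "skeletal_pushout n G H K L gh gk hl kl T \<longleftrightarrow>
     cset_pushout (sk n (nerve1 G)) (sk n (nerve1 H)) (sk n (nerve1 K)) (sk n (nerve1 L))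
       (nerve1_map gh) (nerve1_map gk) (nerve1_map hl) (nerve1_map kl) T"

definition graph_pullback_obj ::
  "'h graph \<Rightarrow> 'k graph \<Rightarrow> ('h \<Rightarrow> 'l) \<Rightarrow> ('k \<Rightarrow> 'l) \<Rightarrow> ('h \<times> 'k) graph" where
  "graph_pullback_obj H K hl kl =
     ({(a, b). a \<in> gverts H \<and> b \<in> gverts K \<and> hl a = kl b},
      \<lambda>(a, b) (a', b'). a \<in> gverts H \<and> b \<in> gverts K \<and> hl a = kl b \<and>
                        a' \<in> gverts H \<and> b' \<in> gverts K \<and> hl a' = kl b' \<and>
                        gedge H a a' \<and> gedge K b b')"

definition graph_is_pullback ::
  "'g graph \<Rightarrow> 'h graph \<Rightarrow> 'k graph \<Rightarrow> 'l graph \<Rightarrow>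
   ('g \<Rightarrow> 'h) \<Rightarrow> ('g \<Rightarrow> 'k) \<Rightarrow> ('h \<Rightarrow> 'l) \<Rightarrow> ('k \<Rightarrow> 'l) \<Rightarrow> bool" where
  "graph_is_pullback G H K L gh gk hl kl \<longleftrightarrow>
     (let P = graph_pullback_obj H K hl kl; c = (\<lambda>x. (gh x, gk x)) in
       bij_betw c (gverts G) (gverts P) \<and>
       (\<forall>x\<in>gverts G. \<forall>y\<in>gverts G. gedge G x y \<longleftrightarrow> gedge P (c x) (c y)))"

end

theory Submission
  imports Defs
begin


definition close :: "bool list \<Rightarrow> bool list \<Rightarrow> bool" where
  "close u v \<longleftrightarrow> length u = length v \<and> (\<exists>i. \<forall>j<length u. j \<noteq> i \<longrightarrow> u!j = v!j)"

lemma cube_char: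
  "cv k = {xs. length xs = k} \<and> (\<forall>u v. gedge (cube k) u v \<longleftrightarrow> length u = k \<and> close u v)"
proof (induction k)
  case 0
  then show ?case by (auto simp: gverts_def gedge_def close_def)
next
  case (Suc k)
  have V: "cv (Suc k) = {xs. length xs = Suc k}"
    using Suc by (auto simp: gverts_def box_prod_def I1_def Let_def image_iff length_Suc_conv)
  have E: "gedge (cube (Suc k)) u v \<longleftrightarrow> length u = Suc k \<and> close u v" for u v
  proof
    assume a: "gedge (cube (Suc k)) u v"
    then obtain x u' y v' where uv: "u = x # u'" "v = y # v'"
      by (cases u; cases v; auto simp: gedge_def Let_def)
    have "(x = y \<and> gedge (cube k) u' v') \<or> (u' = v' \<and> u' \<in> cv k)"
      using a uv by (auto simp: gedge_def box_prod_def Let_def I1_def gverts_def)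
    then show "length u = Suc k \<and> close u v"
    proof
      assume h: "x = y \<and> gedge (cube k) u' v'"
      then obtain i where i: "\<forall>j<length u'. j \<noteq> i \<longrightarrow> u'!j = v'!j" "length u' = k" "length v' = k"
        using Suc by (auto simp: close_def)
      have "\<forall>j<length u. j \<noteq> Suc i \<longrightarrow> u!j = v!j"
        using i h uv by (auto simp: nth_Cons split: nat.splits)
      then show ?thesis using i uv by (auto simp: close_def)
    next
      assume h: "u' = v' \<and> u' \<in> cv k"
      have "\<forall>j<length u. j \<noteq> 0 \<longrightarrow> u!j = v!j"
        using h uv by (auto simp: nth_Cons split: nat.splits)
      moreover have "length u' = k" using h Suc by auto
      ultimately show ?thesis using uv h unfolding close_def
        by (intro conjI exI[of _ 0]; simp)
    qed
  next
    assume a: "length u = Suc k \<and> close u v"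
    then obtain x u' y v' where uv: "u = x # u'" "v = y # v'" "length u' = k" "length v' = k"
      by (cases u; cases v; auto simp: close_def)
    obtain i where i: "\<forall>j<length u. j \<noteq> i \<longrightarrow> u!j = v!j" using a by (auto simp: close_def)
    have "(x = y \<and> gedge (cube k) u' v') \<or> (u' = v' \<and> u' \<in> cv k)"
    proof (cases "x = y")
      case True
      have "\<forall>j<length u'. j \<noteq> i - 1 \<longrightarrow> u'!j = v'!j"
      proof (intro allI impI)
        fix j assume "j < length u'" "j \<noteq> i - 1"
        then have "Suc j < length u" "Suc j \<noteq> i" using uv by auto
        then show "u'!j = v'!j" using i uv by force
      qed
      then show ?thesis using True Suc uv by (auto simp: close_def)
    next
      case False
      then have "i = 0" using i uv by force
      then have "\<forall>j<length u'. u'!j = v'!j" using i uv by force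
      then have "u' = v'" using uv by (simp add: nth_equalityI)
      then show ?thesis using Suc uv by auto
    qed
    then show "gedge (cube (Suc k)) u v"
      using uv by (auto simp: gedge_def box_prod_def Let_def I1_def gverts_def)
  qed
  show ?case using V E by blast
qed

lemma cv_eq: "cv k = {xs. length xs = k}" using cube_char by blast
lemma cedge: "gedge (cube k) u v \<longleftrightarrow> length u = k \<and> close u v" using cube_char by blast



declare cube.simps[simp del]

lemma face_app: "length ys = i \<Longrightarrow> face i e (ys @ rest) = ys @ e # rest"
  by (simp add: face_def)
lemma degen_app: "length ys = i \<Longrightarrow> degen i (ys @ a # rest) = ys @ rest"
  by (simp add: degen_def)
lemma conn_app: "length ys = i \<Longrightarrow> conn i e (ys @ a # b # rest) = ys @ (if e then a \<or> b else a \<and> b) # rest"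
  by (simp add: conn_def nth_append)

lemma face_len: "i \<le> length xs \<Longrightarrow> length (face i e xs) = Suc (length xs)"
  by (simp add: face_def)
lemma degen_len: "i < length xs \<Longrightarrow> length (degen i xs) = length xs - 1"
  by (simp add: degen_def)
lemma conn_len: "Suc i < length xs \<Longrightarrow> length (conn i e xs) = length xs - 1"
  by (simp add: conn_def)

lemma face_nth: "i \<le> length xs \<Longrightarrow> j < Suc (length xs) \<Longrightarrow>
   face i e xs ! j = (if j < i then xs!j else if j = i then e else xs!(j-1))"
  by (auto simp: face_def nth_append min_def)
lemma degen_nth: "i < length xs \<Longrightarrow> j < length xs - 1 \<Longrightarrow>
   degen i xs ! j = (if j < i then xs!j else xs!(Suc j))"
  by (auto simp: degen_def nth_append min_def)
lemma conn_nth: "Suc i < length xs \<Longrightarrow> j < length xs - 1 \<Longrightarrow>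
   conn i e xs ! j = (if j < i then xs!j else if j = i then (if e then xs!i \<or> xs!Suc i else xs!i \<and> xs!Suc i) else xs!(Suc j))"
  by (auto simp: conn_def nth_append min_def)

lemma gm_face: "i \<le> k \<Longrightarrow> graph_map (cube k) (cube (Suc k)) (face i e)"
  unfolding graph_map_def cv_eq
proof (intro conjI ballI impI)
  fix u :: "bool list" assume "i \<le> k" "u \<in> {xs. length xs = k}"
  then show "face i e u \<in> {xs. length xs = Suc k}" by (simp add: face_len)
next
  fix u v :: "bool list" assume a: "i \<le> k" "u \<in> {xs. length xs = k}" "v \<in> {xs. length xs = k}" "gedge (cube k) u v"
  then obtain i0 where i0: "\<forall>j<k. j \<noteq> i0 \<longrightarrow> u!j = v!j" "length u = k" "length v = k"
    by (auto simp: cedge close_def)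
  have "\<forall>j<Suc k. j \<noteq> (if i0 < i then i0 else Suc i0) \<longrightarrow> face i e u ! j = face i e v ! j"
    using i0 a(1) by (auto simp: face_nth)
  then show "gedge (cube (Suc k)) (face i e u) (face i e v)"
    using i0 a(1) unfolding cedge close_def
    by (intro conjI exI[of _ "if i0 < i then i0 else Suc i0"]) (simp_all add: face_len)
qed

lemma gm_degen: "i \<le> k \<Longrightarrow> graph_map (cube (Suc k)) (cube k) (degen i)"
  unfolding graph_map_def cv_eq
proof (intro conjI ballI impI)
  fix u :: "bool list" assume "i \<le> k" "u \<in> {xs. length xs = Suc k}"
  then show "degen i u \<in> {xs. length xs = k}" by (simp add: degen_len)
next
  fix u v :: "bool list" assume a: "i \<le> k" "u \<in> {xs. length xs = Suc k}" "v \<in> {xs. length xs = Suc k}" "gedge (cube (Suc k)) u v"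
  then obtain i0 where i0: "\<forall>j<Suc k. j \<noteq> i0 \<longrightarrow> u!j = v!j" "length u = Suc k" "length v = Suc k"
    by (auto simp: cedge close_def)
  have "\<forall>j<k. j \<noteq> (if i0 \<le> i then i0 else i0 - 1) \<longrightarrow> degen i u ! j = degen i v ! j"
    using i0 a(1) by (auto simp: degen_nth)
  then show "gedge (cube k) (degen i u) (degen i v)"
    using i0 a(1) unfolding cedge close_def
    by (intro conjI exI[of _ "if i0 \<le> i then i0 else i0 - 1"]) (simp_all add: degen_len)
qed

lemma gm_conn: "i \<le> k \<Longrightarrow> graph_map (cube (Suc (Suc k))) (cube (Suc k)) (conn i e)"
  unfolding graph_map_def cv_eq
proof (intro conjI ballI impI)
  fix u :: "bool list" assume "i \<le> k" "u \<in> {xs. length xs = Suc (Suc k)}"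
  then show "conn i e u \<in> {xs. length xs = Suc k}" by (simp add: conn_len)
next
  fix u v :: "bool list" assume a: "i \<le> k" "u \<in> {xs. length xs = Suc (Suc k)}" "v \<in> {xs. length xs = Suc (Suc k)}"
     "gedge (cube (Suc (Suc k))) u v"
  then obtain i0 where i0: "\<forall>j<Suc (Suc k). j \<noteq> i0 \<longrightarrow> u!j = v!j" "length u = Suc (Suc k)" "length v = Suc (Suc k)"
    by (auto simp: cedge close_def)
  have "\<forall>j<Suc k. j \<noteq> (if i0 < i then i0 else if i0 \<le> Suc i then i else i0 - 1) \<longrightarrow> conn i e u ! j = conn i e v ! j"
    using i0 a(1) by (auto simp: conn_nth)
  then show "gedge (cube (Suc k)) (conn i e u) (conn i e v)"
    using i0 a(1) unfolding cedge close_def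
    by (intro conjI exI[of _ "if i0 < i then i0 else if i0 \<le> Suc i then i else i0 - 1"]) (simp_all add: conn_len)
qed

lemma gm_comp: "graph_map A B f \<Longrightarrow> graph_map B C g \<Longrightarrow> graph_map A C (g \<circ> f)"
  by (simp add: graph_map_def)

lemma gm_id: "graph_map A A (\<lambda>x. x)"
  by (simp add: graph_map_def)

lemma box_gm: "box_mor0 k m f \<Longrightarrow> graph_map (cube k) (cube m) f"
proof (induction rule: box_mor0.induct)
  case (idm k)
  then show ?case by (rule gm_id)
next
  case (facem k m f i e)
  then show ?case using gm_comp gm_face by blast
next
  case (degenm k m f i)
  then show ?case using gm_comp gm_degen by blast
next
  case (connm k m f i e)
  then show ?case using gm_comp gm_conn by blast
qed

lemma box_comp: "box_mor0 p q D \<Longrightarrow> box_mor0 j p E \<Longrightarrow> box_mor0 j q (D \<circ> E)"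
proof (induction rule: box_mor0.induct)
  case (idm k)
  then show ?case by (simp add: o_def)
next
  case (facem k m f i e)
  have "box_mor0 j (m) (f \<circ> E)" using facem.IH facem.prems by blast
  then have "box_mor0 j (Suc m) (face i e \<circ> (f \<circ> E))" using facem.hyps(2) by (rule box_mor0.facem)
  then show ?case by (simp add: comp_def)
next
  case (degenm k m f i)
  have "box_mor0 j (Suc m) (f \<circ> E)" using degenm.IH degenm.prems by blast
  then have "box_mor0 j (m) (degen i \<circ> (f \<circ> E))" using degenm.hyps(2) by (rule box_mor0.degenm)
  then show ?case by (simp add: comp_def)
next
  case (connm k m f i e)
  have "box_mor0 j (Suc (Suc m)) (f \<circ> E)" using connm.IH connm.prems by blast
  then have "box_mor0 j (Suc m) (conn i e \<circ> (f \<circ> E))" using connm.hyps(2) by (rule box_mor0.connm)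
  then show ?case by (simp add: comp_def)
qed

lemma box_cv: "box_mor0 k m f \<Longrightarrow> t \<in> cv k \<Longrightarrow> f t \<in> cv m"
  by (drule box_gm) (simp add: graph_map_def)



fun fill :: "bool option list \<Rightarrow> bool list \<Rightarrow> bool list" where
  "fill [] zs = []"
| "fill (Some b # P) zs = b # fill P zs"
| "fill (None # P) zs = hd zs # fill P (tl zs)"

fun nones :: "bool option list \<Rightarrow> nat" where
  "nones [] = 0"
| "nones (Some b # P) = nones P"
| "nones (None # P) = Suc (nones P)"

lemma nones_app[simp]: "nones (P @ Q) = nones P + nones Q"
  by (induction P rule: nones.induct) auto

lemma nones_le: "nones P \<le> length P"
  by (induction P rule: nones.induct) auto

lemma fill_len[simp]: "length (fill P z) = length P"
  by (induction P z rule: fill.induct) auto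

lemma fill_app: "length z1 = nones P1 \<Longrightarrow> fill (P1 @ Q) (z1 @ z2) = fill P1 z1 @ fill Q z2"
proof (induction P1 arbitrary: z1)
  case Nil then show ?case by simp
next
  case (Cons a P1)
  show ?case
  proof (cases a)
    case None
    then obtain v z1' where "z1 = v # z1'" using Cons by (cases z1) auto
    then show ?thesis using Cons None by auto
  next
    case (Some b)
    then show ?thesis using Cons by auto
  qed
qed

lemma nones_rep[simp]: "nones (replicate j None) = j"
  by (induction j) auto

lemma fill_rep: "length z = j \<Longrightarrow> fill (replicate j None) z = z"
  by (induction j arbitrary: z) (auto simp: length_Suc_conv)

lemma split_len: "length z = a + b \<Longrightarrow> \<exists>z1 z2. z = z1 @ z2 \<and> length z1 = a \<and> length z2 = b"
  by (rule exI[of _ "take a z"], rule exI[of _ "drop a z"]) auto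

lemma split_len1: "length z = a + Suc b \<Longrightarrow> \<exists>z1 v z2. z = z1 @ v # z2 \<and> length z1 = a \<and> length z2 = b"
  by (metis append_eq_conv_conj length_Suc_conv split_len)

definition ope :: "bool \<Rightarrow> bool \<Rightarrow> bool \<Rightarrow> bool" where
  "ope e a b = (if e then a \<or> b else a \<and> b)"

definition NFw :: "nat \<Rightarrow> (bool list \<Rightarrow> bool list) \<Rightarrow> bool option list \<Rightarrow>
   (bool list \<Rightarrow> bool list) \<Rightarrow> (bool list \<Rightarrow> bool list) \<Rightarrow> bool" where
  "NFw j f P E \<sigma> \<longleftrightarrow> box_mor0 j (nones P) E \<and> graph_map (cube (nones P)) (cube j) \<sigma> \<and>
     (\<forall>z\<in>cv (nones P). E (\<sigma> z) = z) \<and> (\<forall>t\<in>cv j. f t = fill P (E t))"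

definition NF :: "nat \<Rightarrow> nat \<Rightarrow> (bool list \<Rightarrow> bool list) \<Rightarrow> bool" where
  "NF j m f \<longleftrightarrow> (\<exists>P E \<sigma>. length P = m \<and> NFw j f P E \<sigma>)"

lemma nf_upd:
  assumes w: "NFw j f0 P E \<sigma>"
    and D: "box_mor0 (nones P) (nones P') D" "graph_map (cube (nones P')) (cube (nones P)) \<tau>"
      "\<forall>z\<in>cv (nones P'). D (\<tau> z) = z"
    and g: "\<forall>z\<in>cv (nones P). g (fill P z) = fill P' (D z)"
    and l: "length P' = m"
  shows "NF j m (g \<circ> f0)"
  unfolding NF_def
proof (intro exI conjI)
  show "length P' = m" by fact
  have E: "box_mor0 j (nones P) E" and s: "graph_map (cube (nones P)) (cube j) \<sigma>"
    and es: "\<forall>z\<in>cv (nones P). E (\<sigma> z) = z" and f: "\<forall>t\<in>cv j. f0 t = fill P (E t)"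
    using w by (auto simp: NFw_def)
  show "NFw j (g \<circ> f0) P' (D \<circ> E) (\<sigma> \<circ> \<tau>)"
    unfolding NFw_def
  proof (intro conjI ballI)
    show "box_mor0 j (nones P') (D \<circ> E)" using box_comp D(1) E by blast
    show "graph_map (cube (nones P')) (cube j) (\<sigma> \<circ> \<tau>)" using gm_comp D(2) s by blast
  next
    fix z assume z: "z \<in> cv (nones P')"
    then have "\<tau> z \<in> cv (nones P)" using D(2) by (auto simp: graph_map_def)
    then show "(D \<circ> E) ((\<sigma> \<circ> \<tau>) z) = z" using es D(3) z by auto
  next
    fix t assume t: "t \<in> cv j"
    then have "E t \<in> cv (nones P)" using box_cv E by blast
    then show "(g \<circ> f0) t = fill P' ((D \<circ> E) t)" using f g t by auto
  qed
qed

lemma nf_id: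
  assumes w: "NFw j f0 P E \<sigma>" and "nones P' = nones P"
    and g: "\<forall>z\<in>cv (nones P). g (fill P z) = fill P' z"
    and l: "length P' = m"
  shows "NF j m (g \<circ> f0)"
  apply (rule nf_upd[OF w, where D="\<lambda>x. x" and \<tau>="\<lambda>x. x"])
  using assms by (auto intro: box_mor0.idm gm_id)

lemma box_degen1: "k \<le> q \<Longrightarrow> box_mor0 (Suc q) q (degen k)"
  using box_mor0.degenm[OF box_mor0.idm, of k q] by (simp add: o_def)

lemma box_conn1: "k \<le> q \<Longrightarrow> box_mor0 (Suc (Suc q)) (Suc q) (conn k e)"
  using box_mor0.connm[OF box_mor0.idm, of k q e] by (simp add: o_def)

lemma box_face1: "k \<le> q \<Longrightarrow> box_mor0 q (Suc q) (face k e)"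
  using box_mor0.facem[OF box_mor0.idm, of k q e] by (simp add: o_def)

lemma nf_degen:
  assumes w: "NFw j f0 P E \<sigma>" and q: "nones P = Suc (nones P')" and k: "k \<le> nones P'"
    and g: "\<forall>z\<in>cv (nones P). g (fill P z) = fill P' (degen k z)"
    and l: "length P' = m"
  shows "NF j m (g \<circ> f0)"
proof (rule nf_upd[OF w, where D="degen k" and \<tau>="face k False"])
  show "box_mor0 (nones P) (nones P') (degen k)" using box_degen1 k q by simp
  show "graph_map (cube (nones P')) (cube (nones P)) (face k False)" using gm_face k q by simp
  show "\<forall>z\<in>cv (nones P'). degen k (face k False z) = z"
  proof
    fix z assume "z \<in> cv (nones P')"
    then obtain z1 z2 where "z = z1 @ z2" "length z1 = k" using split_len[of z k] k
      by (auto simp: cv_eq) (metis le_add_diff_inverse)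
    then show "degen k (face k False z) = z" by (simp add: face_app degen_app)
  qed
qed (use g l in auto)

lemma nf_conn:
  assumes w: "NFw j f0 P E \<sigma>" and q: "nones P = Suc (Suc q)" "nones P' = Suc q" and k: "k \<le> q"
    and g: "\<forall>z\<in>cv (nones P). g (fill P z) = fill P' (conn k e z)"
    and l: "length P' = m"
  shows "NF j m (g \<circ> f0)"
proof (rule nf_upd[OF w, where D="conn k e" and \<tau>="face (Suc k) (\<not> e)"])
  show "box_mor0 (nones P) (nones P') (conn k e)" using box_conn1 k q by simp
  show "graph_map (cube (nones P')) (cube (nones P)) (face (Suc k) (\<not> e))" using gm_face k q by simp
  show "\<forall>z\<in>cv (nones P'). conn k e (face (Suc k) (\<not> e) z) = z"
  proof
    fix z assume "z \<in> cv (nones P')"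
    then have "length z = k + Suc (q - k)" using k q by (auto simp: cv_eq)
    then obtain z1 v z2 where "z = z1 @ v # z2" "length z1 = k" using split_len1 by blast
    moreover have "face (Suc k) (\<not> e) (z1 @ v # z2) = (z1 @ [v]) @ (\<not> e) # z2"
      using calculation face_app[of "z1 @ [v]" "Suc k" "\<not> e" z2] by simp
    ultimately show "conn k e (face (Suc k) (\<not> e) z) = z" by (simp add: conn_app)
  qed
qed (use g l in auto)



lemma conn_ope: "length ys = i \<Longrightarrow> conn i e (ys @ a # b # rest) = ys @ ope e a b # rest"
  by (simp add: conn_app ope_def)

lemma splitP: "length P1 = i \<Longrightarrow> z \<in> cv (nones (P1 @ Q)) \<Longrightarrow>
  \<exists>z1 z2. z = z1 @ z2 \<and> length z1 = nones P1 \<and> length z2 = nones Q"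
  by (rule split_len) (simp add: cv_eq)

lemma splitP1: "z \<in> cv (nones (P1 @ None # Q)) \<Longrightarrow>
  \<exists>z1 v z2. z = z1 @ v # z2 \<and> length z1 = nones P1 \<and> length z2 = nones Q"
  by (rule split_len1) (simp add: cv_eq)

lemma splitP2: "z \<in> cv (nones (P1 @ None # None # Q)) \<Longrightarrow>
  \<exists>z1 v v' z2. z = z1 @ v # v' # z2 \<and> length z1 = nones P1 \<and> length z2 = nones Q"
proof -
  assume "z \<in> cv (nones (P1 @ None # None # Q))"
  then have "length z = nones P1 + Suc (Suc (nones Q))" by (simp add: cv_eq)
  then obtain z1 v z2' where "z = z1 @ v # z2'" "length z1 = nones P1" "length z2' = Suc (nones Q)"
    using split_len1 by blast
  moreover then obtain v' z2 where "z2' = v' # z2" by (cases z2') auto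
  ultimately show ?thesis by auto
qed

lemma dec1: "Suc i \<le> length P \<Longrightarrow> \<exists>P1 x P2. P = P1 @ x # P2 \<and> length P1 = i"
proof -
  assume a: "Suc i \<le> length P"
  then have "drop i P = P ! i # drop (Suc i) P" by (simp add: Cons_nth_drop_Suc)
  then have "P = take i P @ P ! i # drop (Suc i) P" by (metis append_take_drop_id)
  moreover have "length (take i P) = i" using a by simp
  ultimately show ?thesis by blast
qed

lemma dec2: "Suc (Suc i) \<le> length P \<Longrightarrow> \<exists>P1 x y P2. P = P1 @ x # y # P2 \<and> length P1 = i"
proof -
  assume a: "Suc (Suc i) \<le> length P"
  then obtain P1 x P2 where "P = P1 @ x # P2" "length P1 = i" using dec1[of i P] by auto
  moreover then obtain y P3 where "P2 = y # P3" using a by (cases P2) auto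
  ultimately show ?thesis by auto
qed

lemma box_NF: "box_mor0 j m f \<Longrightarrow> NF j m f"
proof (induction rule: box_mor0.induct)
  case (idm k)
  show ?case unfolding NF_def NFw_def
    by (rule exI[of _ "replicate k None"], rule exI[of _ "\<lambda>x. x"], rule exI[of _ "\<lambda>x. x"])
       (auto intro: box_mor0.idm gm_id simp: cv_eq fill_rep)
next
  case (facem k m f i e)
  then obtain P E \<sigma> where w: "NFw k f P E \<sigma>" "length P = m" by (auto simp: NF_def)
  define P1 where "P1 = take i P"
  define P2 where "P2 = drop i P"
  have PP: "P = P1 @ P2" "length P1 = i" using facem w by (auto simp: P1_def P2_def)
  show ?case
  proof (rule nf_id[OF w(1), where P'="P1 @ Some e # P2"])
    show "\<forall>z\<in>cv (nones P). face i e (fill P z) = fill (P1 @ Some e # P2) z"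
    proof
      fix z assume "z \<in> cv (nones P)"
      then obtain z1 z2 where "z = z1 @ z2" "length z1 = nones P1" using splitP PP by metis
      then show "face i e (fill P z) = fill (P1 @ Some e # P2) z"
        using PP by (simp add: fill_app face_app)
    qed
  qed (use PP w in auto)
next
  case (degenm k m f i)
  then obtain P E \<sigma> where w: "NFw k f P E \<sigma>" "length P = Suc m" by (auto simp: NF_def)
  then obtain P1 x P2 where PP: "P = P1 @ x # P2" "length P1 = i" using dec1[of i P] degenm by auto
  show ?case
  proof (cases x)
    case (Some b)
    show ?thesis
    proof (rule nf_id[OF w(1), where P'="P1 @ P2"])
      show "\<forall>z\<in>cv (nones P). degen i (fill P z) = fill (P1 @ P2) z"
      proof
        fix z assume "z \<in> cv (nones P)"
        then obtain z1 z2 where "z = z1 @ z2" "length z1 = nones P1" using splitP PP by metis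
        then show "degen i (fill P z) = fill (P1 @ P2) z"
          using PP Some by (simp add: fill_app degen_app)
      qed
    qed (use PP w Some in auto)
  next
    case None
    show ?thesis
    proof (rule nf_degen[OF w(1), where P'="P1 @ P2" and k="nones P1"])
      show "\<forall>z\<in>cv (nones P). degen i (fill P z) = fill (P1 @ P2) (degen (nones P1) z)"
      proof
        fix z assume "z \<in> cv (nones P)"
        then obtain z1 v z2 where "z = z1 @ v # z2" "length z1 = nones P1" using splitP1 PP None by metis
        then show "degen i (fill P z) = fill (P1 @ P2) (degen (nones P1) z)"
          using PP None by (simp add: fill_app degen_app)
      qed
    qed (use PP w None in auto)
  qed
next
  case (connm k m f i e)
  then obtain P E \<sigma> where w: "NFw k f P E \<sigma>" "length P = Suc (Suc m)" by (auto simp: NF_def)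
  then obtain P1 x y P2 where PP: "P = P1 @ x # y # P2" "length P1 = i" using dec2[of i P] connm by auto
  show ?case
  proof (cases x)
    case xS: (Some a)
    show ?thesis
    proof (cases y)
      case yS: (Some b)
      show ?thesis
      proof (rule nf_id[OF w(1), where P'="P1 @ Some (ope e a b) # P2"])
        show "\<forall>z\<in>cv (nones P). conn i e (fill P z) = fill (P1 @ Some (ope e a b) # P2) z"
        proof
          fix z assume "z \<in> cv (nones P)"
          then obtain z1 z2 where "z = z1 @ z2" "length z1 = nones P1" using splitP PP by metis
          then show "conn i e (fill P z) = fill (P1 @ Some (ope e a b) # P2) z"
            using PP xS yS by (simp add: fill_app conn_ope)
        qed
      qed (use PP w xS yS in auto)
    next
      case yN: None
      show ?thesis
      proof (cases "a = e")
        case True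
        show ?thesis
        proof (rule nf_degen[OF w(1), where P'="P1 @ Some e # P2" and k="nones P1"])
          show "\<forall>z\<in>cv (nones P). conn i e (fill P z) = fill (P1 @ Some e # P2) (degen (nones P1) z)"
          proof
            fix z assume "z \<in> cv (nones P)"
            then obtain z1 v z2 where "z = z1 @ v # z2" "length z1 = nones P1"
              using splitP1[of z "P1 @ [Some a]" P2] PP xS yN by auto
            then show "conn i e (fill P z) = fill (P1 @ Some e # P2) (degen (nones P1) z)"
              using PP xS yN True by (simp add: fill_app conn_ope degen_app ope_def)
          qed
        qed (use PP w xS yN in auto)
      next
        case False
        show ?thesis
        proof (rule nf_id[OF w(1), where P'="P1 @ None # P2"])
          show "\<forall>z\<in>cv (nones P). conn i e (fill P z) = fill (P1 @ None # P2) z"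
          proof
            fix z assume "z \<in> cv (nones P)"
            then obtain z1 v z2 where "z = z1 @ v # z2" "length z1 = nones P1"
              using splitP1[of z "P1 @ [Some a]" P2] PP xS yN by auto
            then show "conn i e (fill P z) = fill (P1 @ None # P2) z"
              using PP xS yN False by (simp add: fill_app conn_ope ope_def)
          qed
        qed (use PP w xS yN in auto)
      qed
    qed
  next
    case xN: None
    show ?thesis
    proof (cases y)
      case yS: (Some b)
      show ?thesis
      proof (cases "b = e")
        case True
        show ?thesis
        proof (rule nf_degen[OF w(1), where P'="P1 @ Some e # P2" and k="nones P1"])
          show "\<forall>z\<in>cv (nones P). conn i e (fill P z) = fill (P1 @ Some e # P2) (degen (nones P1) z)"
          proof
            fix z assume "z \<in> cv (nones P)"
            then obtain z1 v z2 where "z = z1 @ v # z2" "length z1 = nones P1"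
              using splitP1[of z P1 "Some b # P2"] PP xN yS by auto
            then show "conn i e (fill P z) = fill (P1 @ Some e # P2) (degen (nones P1) z)"
              using PP xN yS True by (simp add: fill_app conn_ope degen_app ope_def)
          qed
        qed (use PP w xN yS in auto)
      next
        case False
        show ?thesis
        proof (rule nf_id[OF w(1), where P'="P1 @ None # P2"])
          show "\<forall>z\<in>cv (nones P). conn i e (fill P z) = fill (P1 @ None # P2) z"
          proof
            fix z assume "z \<in> cv (nones P)"
            then obtain z1 v z2 where "z = z1 @ v # z2" "length z1 = nones P1"
              using splitP1[of z P1 "Some b # P2"] PP xN yS by auto
            then show "conn i e (fill P z) = fill (P1 @ None # P2) z"
              using PP xN yS False by (simp add: fill_app conn_ope ope_def)
          qed
        qed (use PP w xN yS in auto)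
      qed
    next
      case yN: None
      show ?thesis
      proof (rule nf_conn[OF w(1), where P'="P1 @ None # P2" and k="nones P1" and q="nones P1 + nones P2"])
        show "\<forall>z\<in>cv (nones P). conn i e (fill P z) = fill (P1 @ None # P2) (conn (nones P1) e z)"
        proof
          fix z assume "z \<in> cv (nones P)"
          then obtain z1 v v' z2 where "z = z1 @ v # v' # z2" "length z1 = nones P1"
            using splitP2[of z P1 P2] PP xN yN by auto
          then show "conn i e (fill P z) = fill (P1 @ None # P2) (conn (nones P1) e z)"
            using PP xN yN by (simp add: fill_app conn_ope)
        qed
      qed (use PP w xN yN in auto)
    qed
  qed
qed



lemma cells_nerve: "cells (nerve1 G) k = {c. c \<in> extensional (cv k) \<and> graph_map (cube k) G c}"
  by (simp add: cells_def nerve1_def)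
lemma act_nerve: "act (nerve1 G) k m f c = restrict (c \<circ> f) (cv k)"
  by (simp add: act_def nerve1_def)
lemma cells_sk: "cells (sk n X) k = \<Inter> {S k | S. sub_cset X S \<and> (\<forall>m\<le>n. cells X m \<subseteq> S m)}"
  by (simp add: cells_def sk_def)
lemma act_sk[simp]: "act (sk n X) = act X"
  by (simp add: act_def sk_def)

lemma boxhomE: "f \<in> boxhom k m \<Longrightarrow> \<exists>f0. box_mor0 k m f0 \<and> f = restrict f0 (cv k)"
  by (auto simp: boxhom_def)
lemma boxhomI: "box_mor0 k m f0 \<Longrightarrow> restrict f0 (cv k) \<in> boxhom k m"
  by (auto simp: boxhom_def)

lemma act_nerve_box: "box_mor0 k m f0 \<Longrightarrow>
  act (nerve1 G) k m (restrict f0 (cv k)) c = restrict (c \<circ> f0) (cv k)"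
  by (auto simp: act_nerve)

lemma nerve_closed0: "box_mor0 k m f0 \<Longrightarrow> c \<in> cells (nerve1 G) m \<Longrightarrow>
   restrict (c \<circ> f0) (cv k) \<in> cells (nerve1 G) k"
  using box_gm[of k m f0] by (auto simp: cells_nerve graph_map_def)

lemma nerve_closed: "f \<in> boxhom k m \<Longrightarrow> c \<in> cells (nerve1 G) m \<Longrightarrow>
   act (nerve1 G) k m f c \<in> cells (nerve1 G) k"
proof -
  assume f: "f \<in> boxhom k m" and c: "c \<in> cells (nerve1 G) m"
  obtain f0 where f0: "box_mor0 k m f0" "f = restrict f0 (cv k)" using boxhomE[OF f] by blast
  show ?thesis unfolding f0(2) act_nerve_box[OF f0(1)] by (rule nerve_closed0[OF f0(1) c])
qed

lemma sub_nerve: "sub_cset (nerve1 G) (cells (nerve1 G))"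
  unfolding sub_cset_def using nerve_closed[where G=G] by blast

lemma sk_min: "sub_cset X S \<Longrightarrow> (\<forall>m\<le>n. cells X m \<subseteq> S m) \<Longrightarrow> cells (sk n X) k \<subseteq> S k"
  unfolding cells_sk by blast

lemma sk_low: "m \<le> n \<Longrightarrow> x \<in> cells X m \<Longrightarrow> x \<in> cells (sk n X) m"
  unfolding cells_sk by blast

lemma sk_in: "sub_cset X (cells X) \<Longrightarrow> x \<in> cells (sk n X) k \<Longrightarrow> x \<in> cells X k"
  using sk_min[of X "cells X" n k] by auto

lemma sk_closed: "f \<in> boxhom k m \<Longrightarrow> x \<in> cells (sk n X) m \<Longrightarrow> act X k m f x \<in> cells (sk n X) k"
proof -
  assume f: "f \<in> boxhom k m" and x: "x \<in> cells (sk n X) m"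
  show ?thesis unfolding cells_sk
  proof (rule InterI)
    fix T assume "T \<in> {S k | S. sub_cset X S \<and> (\<forall>m\<le>n. cells X m \<subseteq> S m)}"
    then obtain S where S: "T = S k" "sub_cset X S" "\<forall>m\<le>n. cells X m \<subseteq> S m" by blast
    then have "x \<in> S m" using sk_min x by blast
    then show "act X k m f x \<in> T" using S f unfolding sub_cset_def by blast
  qed
qed

lemma sk_char:
  assumes "x \<in> cells (sk n (nerve1 G)) k"
  shows "\<exists>m f0 y. m \<le> n \<and> box_mor0 k m f0 \<and> y \<in> cells (nerve1 G) m \<and> x = restrict (y \<circ> f0) (cv k)"
proof -
  define S where "S k = {x. \<exists>m f0 y. m \<le> n \<and> box_mor0 k m f0 \<and> y \<in> cells (nerve1 G) m \<and> x = restrict (y \<circ> f0) (cv k)}" for k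
  have "sub_cset (nerve1 G) S"
    unfolding sub_cset_def
  proof (intro conjI allI impI subsetI)
    fix k x assume "x \<in> S k"
    then obtain m f0 y where y: "box_mor0 k m f0" "y \<in> cells (nerve1 G) m" "x = restrict (y \<circ> f0) (cv k)"
      unfolding S_def by blast
    then show "x \<in> cells (nerve1 G) k" using nerve_closed0[OF y(1) y(2)] by simp
  next
    fix k m f x assume f: "f \<in> boxhom k m" and x: "x \<in> S m"
    then obtain g0 where g0: "box_mor0 k m g0" "f = restrict g0 (cv k)" using boxhomE by blast
    obtain p f0 y where y: "p \<le> n" "box_mor0 m p f0" "y \<in> cells (nerve1 G) p" "x = restrict (y \<circ> f0) (cv m)"
      using x unfolding S_def by blast
    have eq: "act (nerve1 G) k m f x = restrict (y \<circ> (f0 \<circ> g0)) (cv k)"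
      unfolding act_nerve g0(2) y(4) by (rule restrict_ext) (simp add: box_cv[OF g0(1)])
    have bc: "box_mor0 k p (f0 \<circ> g0)" using box_comp y(2) g0(1) by blast
    show "act (nerve1 G) k m f x \<in> S k"
      unfolding S_def mem_Collect_eq
      by (rule exI[of _ p], rule exI[of _ "f0 \<circ> g0"], rule exI[of _ y]) (simp add: y(1) y(3) bc eq)
  qed
  moreover have "\<forall>m\<le>n. cells (nerve1 G) m \<subseteq> S m"
  proof (intro allI impI subsetI)
    fix m x assume m: "m \<le> n" and x: "x \<in> cells (nerve1 G) m"
    then have "x \<in> extensional (cv m)" by (simp add: cells_nerve)
    then have e: "x = restrict (x \<circ> (\<lambda>x. x)) (cv m)" by (simp add: comp_def extensional_restrict)
    show "x \<in> S m" unfolding S_def mem_Collect_eq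
      by (rule exI[of _ m], rule exI[of _ "\<lambda>x. x"], rule exI[of _ x]) (use m x e box_mor0.idm in simp)
  qed
  ultimately have "x \<in> S k" using sk_min assms by blast
  then show ?thesis unfolding S_def by blast
qed

lemma sk_nerve_in: "x \<in> cells (sk n (nerve1 G)) k \<Longrightarrow> x \<in> cells (nerve1 G) k"
  by (rule sk_in[OF sub_nerve])

lemma nm_cells: "graph_map G H \<phi> \<Longrightarrow> c \<in> cells (nerve1 G) k \<Longrightarrow> nerve1_map \<phi> k c \<in> cells (nerve1 H) k"
  by (auto simp: cells_nerve graph_map_def nerve1_map_def)

lemma nm_nat: "f \<in> boxhom k m \<Longrightarrow> c \<in> cells (nerve1 G) m \<Longrightarrow>
   nerve1_map \<phi> k (act (nerve1 G) k m f c) = act (nerve1 H) k m f (nerve1_map \<phi> m c)"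
proof -
  assume f: "f \<in> boxhom k m"
  then obtain f0 where f0: "box_mor0 k m f0" "f = restrict f0 (cv k)" using boxhomE by blast
  show ?thesis using box_cv[OF f0(1)] f0 by (auto simp: act_nerve nerve1_map_def)
qed

lemma nm_sk: "graph_map G H \<phi> \<Longrightarrow> c \<in> cells (sk n (nerve1 G)) k \<Longrightarrow>
   nerve1_map \<phi> k c \<in> cells (sk n (nerve1 H)) k"
proof -
  assume g: "graph_map G H \<phi>" and c: "c \<in> cells (sk n (nerve1 G)) k"
  obtain m f0 y where y: "m \<le> n" "box_mor0 k m f0" "y \<in> cells (nerve1 G) m" "c = restrict (y \<circ> f0) (cv k)"
    using sk_char[OF c] by blast
  have c_eq: "c = act (nerve1 G) k m (restrict f0 (cv k)) y" using y(4) by (simp add: act_nerve_box[OF y(2)])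
  have "nerve1_map \<phi> k c = act (nerve1 H) k m (restrict f0 (cv k)) (nerve1_map \<phi> m y)"
    unfolding c_eq by (rule nm_nat[OF boxhomI[OF y(2)] y(3)])
  moreover have "nerve1_map \<phi> m y \<in> cells (sk n (nerve1 H)) m"
    by (rule sk_low[OF y(1) nm_cells[OF g y(3)]])
  ultimately show ?thesis using sk_closed[OF boxhomI[OF y(2)], of _ n "nerve1 H"] by simp
qed

lemma nm_inj: "inj_on \<phi> (gverts G) \<Longrightarrow> c \<in> cells (nerve1 G) k \<Longrightarrow> c' \<in> cells (nerve1 G) k \<Longrightarrow>
   nerve1_map \<phi> k c = nerve1_map \<phi> k c' \<Longrightarrow> c = c'"
proof -
  assume i: "inj_on \<phi> (gverts G)" and c: "c \<in> cells (nerve1 G) k" and c': "c' \<in> cells (nerve1 G) k"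
    and e: "nerve1_map \<phi> k c = nerve1_map \<phi> k c'"
  show "c = c'"
  proof (rule extensionalityI[of _ "cv k"])
    show "c \<in> extensional (cv k)" "c' \<in> extensional (cv k)" using c c' by (auto simp: cells_nerve)
  next
    fix x assume x: "x \<in> cv k"
    then have "\<phi> (c x) = \<phi> (c' x)" using fun_cong[OF e, of x] by (simp add: nerve1_map_def)
    moreover have "c x \<in> gverts G" "c' x \<in> gverts G" using c c' x by (auto simp: cells_nerve graph_map_def)
    ultimately show "c x = c' x" using i by (auto dest: inj_onD)
  qed
qed

lemma gm_restrict: "graph_map A B f \<Longrightarrow> graph_map A B (restrict f (gverts A))"
  by (simp add: graph_map_def)

lemma reflect:
  assumes m: "graph_mono G H \<phi>" and a: "a \<in> cells (nerve1 G) j"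
    and s: "nerve1_map \<phi> j a \<in> cells (sk n (nerve1 H)) j"
  shows "a \<in> cells (sk n (nerve1 G)) j"
proof -
  obtain m f x where x: "m \<le> n" "box_mor0 j m f" "x \<in> cells (nerve1 H) m"
      "nerve1_map \<phi> j a = restrict (x \<circ> f) (cv j)"
    using sk_char[OF s] by blast
  obtain P E \<sigma> where P: "length P = m" "NFw j f P E \<sigma>" using box_NF[OF x(2)] unfolding NF_def by blast
  define p where "p = nones P"
  have E: "box_mor0 j p E" and sg: "graph_map (cube p) (cube j) \<sigma>"
    and es: "\<forall>z\<in>cv p. E (\<sigma> z) = z" and fE: "\<forall>t\<in>cv j. f t = fill P (E t)"
    using P(2) unfolding NFw_def p_def by blast+
  have pn: "p \<le> n" using nones_le[of P] P(1) x(1) unfolding p_def by linarith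
  define y where "y = restrict (a \<circ> \<sigma>) (cv p)"
  have ag: "graph_map (cube j) G a" and ae: "a \<in> extensional (cv j)" using a by (simp_all add: cells_nerve)
  have "y \<in> cells (nerve1 G) p"
    unfolding cells_nerve mem_Collect_eq y_def
    using gm_restrict[OF gm_comp[OF sg ag]] by simp
  then have "y \<in> cells (sk n (nerve1 G)) p" by (rule sk_low[OF pn])
  then have yE: "act (nerve1 G) j p (restrict E (cv j)) y \<in> cells (sk n (nerve1 G)) j"
    by (rule sk_closed[OF boxhomI[OF E]])
  have inj: "inj_on \<phi> (gverts G)" using m by (simp add: graph_mono_def)
  have phi: "\<phi> (a s) = x (f s)" if "s \<in> cv j" for s
    using fun_cong[OF x(4), of s] that by (simp add: nerve1_map_def)
  have "act (nerve1 G) j p (restrict E (cv j)) y = a"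
  proof (rule extensionalityI[of _ "cv j"])
    show "act (nerve1 G) j p (restrict E (cv j)) y \<in> extensional (cv j)" by (simp add: act_nerve)
    show "a \<in> extensional (cv j)" by (rule ae)
  next
    fix t assume t: "t \<in> cv j"
    have Et: "E t \<in> cv p" by (rule box_cv[OF E t])
    have st: "\<sigma> (E t) \<in> cv j" using sg Et unfolding graph_map_def by blast
    have 1: "\<phi> (a (\<sigma> (E t))) = x (f (\<sigma> (E t)))" by (rule phi[OF st])
    have 2: "f (\<sigma> (E t)) = fill P (E (\<sigma> (E t)))" using fE st by blast
    have 3: "E (\<sigma> (E t)) = E t" using es Et by blast
    have 4: "f t = fill P (E t)" using fE t by blast
    have 5: "\<phi> (a t) = x (f t)" by (rule phi[OF t])
    have "\<phi> (a (\<sigma> (E t))) = \<phi> (a t)" unfolding 1 5 2 3 4 ..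
    moreover have "a (\<sigma> (E t)) \<in> gverts G" "a t \<in> gverts G"
      using ag st t unfolding graph_map_def by blast+
    ultimately have "a (\<sigma> (E t)) = a t" using inj_onD[OF inj] by blast
    then show "act (nerve1 G) j p (restrict E (cv j)) y t = a t"
      using t Et by (simp add: act_nerve y_def)
  qed
  then show ?thesis using yE by simp
qed



lemma box_drop: "t \<le> n \<Longrightarrow> box_mor0 n (n - t) (drop t)"
proof (induction t)
  case 0
  then show ?case using box_mor0.idm[of n] by (simp add: fun_eq_iff)
next
  case (Suc t)
  then have "box_mor0 n (Suc (n - Suc t)) (drop t)" by (simp add: Suc_diff_Suc)
  then have "box_mor0 n (n - Suc t) (degen 0 \<circ> drop t)" by (rule box_mor0.degenm) simp
  moreover have "degen 0 \<circ> drop t = drop (Suc t)" by (simp add: fun_eq_iff degen_def)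
  ultimately show ?case by simp
qed

lemma box_rep: "box_mor0 m (m + t) (\<lambda>z. replicate t False @ z)"
proof (induction t)
  case 0
  then show ?case using box_mor0.idm[of m] by simp
next
  case (Suc t)
  then have "box_mor0 m (Suc (m + t)) (face 0 False \<circ> (\<lambda>z. replicate t False @ z))"
    by (rule box_mor0.facem) simp
  moreover have "face 0 False \<circ> (\<lambda>z. replicate t False @ z) = (\<lambda>z. replicate (Suc t) False @ z)"
    by (simp add: fun_eq_iff face_def)
  ultimately show ?case by simp
qed

lemma mor_sk: "graph_map G H \<phi> \<Longrightarrow> cset_mor (sk n (nerve1 G)) (sk n (nerve1 H)) (nerve1_map \<phi>)"
  unfolding cset_mor_def
proof (intro conjI allI ballI impI)
  fix k x assume "graph_map G H \<phi>" "x \<in> cells (sk n (nerve1 G)) k"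
  then show "nerve1_map \<phi> k x \<in> cells (sk n (nerve1 H)) k" by (rule nm_sk)
next
  fix k m f x assume "f \<in> boxhom k m" "x \<in> cells (sk n (nerve1 G)) m"
  then show "nerve1_map \<phi> k (act (sk n (nerve1 G)) k m f x) = act (sk n (nerve1 H)) k m f (nerve1_map \<phi> m x)"
    using nm_nat[OF _ sk_nerve_in] by simp
qed

lemma comp_nm:
  assumes "c \<in> cells (nerve1 G) j" "\<forall>x\<in>gverts G. hl (gh x) = kl (gk x)"
  shows "nerve1_map hl j (nerve1_map gh j c) = nerve1_map kl j (nerve1_map gk j c)"
  unfolding nerve1_map_def
proof (rule restrict_ext)
  fix t assume "t \<in> cv j"
  moreover then have "c t \<in> gverts G" using assms(1) by (auto simp: cells_nerve graph_map_def)
  ultimately show "(hl \<circ> restrict (gh \<circ> c) (cv j)) t = (kl \<circ> restrict (gk \<circ> c) (cv j)) t"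
    using assms(2) by simp
qed

lemma pb_lift:
  assumes pb: "graph_is_pullback G H K L gh gk hl kl"
    and b: "b \<in> cells (nerve1 H) j" and c: "c \<in> cells (nerve1 K) j"
    and e: "nerve1_map hl j b = nerve1_map kl j c"
  shows "\<exists>a\<in>cells (nerve1 G) j. nerve1_map gh j a = b \<and> nerve1_map gk j a = c"
proof -
  define P where "P = graph_pullback_obj H K hl kl"
  define q where "q = (\<lambda>x. (gh x, gk x))"
  have bij: "bij_betw q (gverts G) (gverts P)"
    and ed: "\<forall>x\<in>gverts G. \<forall>y\<in>gverts G. gedge G x y \<longleftrightarrow> gedge P (q x) (q y)"
    using pb unfolding graph_is_pullback_def P_def q_def Let_def by blast+
  have bg: "graph_map (cube j) H b" and be: "b \<in> extensional (cv j)" using b by (simp_all add: cells_nerve)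
  have cg: "graph_map (cube j) K c" and ce: "c \<in> extensional (cv j)" using c by (simp_all add: cells_nerve)
  have inP: "(b t, c t) \<in> gverts P" if "t \<in> cv j" for t
  proof -
    have "hl (b t) = kl (c t)" using fun_cong[OF e, of t] that by (simp add: nerve1_map_def)
    moreover have "b t \<in> gverts H" "c t \<in> gverts K" using bg cg that unfolding graph_map_def by blast+
    ultimately show ?thesis by (simp add: P_def graph_pullback_obj_def gverts_def)
  qed
  define a where "a = restrict (\<lambda>t. inv_into (gverts G) q (b t, c t)) (cv j)"
  have aG: "a t \<in> gverts G" and qa: "q (a t) = (b t, c t)" if "t \<in> cv j" for t
    using bij inP[OF that] that unfolding a_def
    by (auto simp: bij_betw_def inv_into_into f_inv_into_f)
  have "graph_map (cube j) G a"
    unfolding graph_map_def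
  proof (intro conjI ballI impI)
    fix t assume "t \<in> gverts (cube j)" then show "a t \<in> gverts G" by (rule aG)
  next
    fix t t' assume t: "t \<in> gverts (cube j)" and t': "t' \<in> gverts (cube j)" and ee: "gedge (cube j) t t'"
    have "gedge H (b t) (b t')" using bg t t' ee unfolding graph_map_def by blast
    moreover have "gedge K (c t) (c t')" using cg t t' ee unfolding graph_map_def by blast
    ultimately have "gedge P (b t, c t) (b t', c t')"
      using inP[OF t] inP[OF t'] by (simp add: P_def graph_pullback_obj_def gedge_def gverts_def)
    then have "gedge P (q (a t)) (q (a t'))" using qa t t' by simp
    then show "gedge G (a t) (a t')" using ed aG t t' by blast
  qed
  then have ac: "a \<in> cells (nerve1 G) j" by (simp add: cells_nerve a_def)
  have "nerve1_map gh j a = b"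
  proof (rule extensionalityI[of _ "cv j"])
    show "nerve1_map gh j a \<in> extensional (cv j)" by (simp add: nerve1_map_def)
    show "b \<in> extensional (cv j)" by (rule be)
    fix t assume "t \<in> cv j" then show "nerve1_map gh j a t = b t" using qa by (simp add: nerve1_map_def q_def)
  qed
  moreover have "nerve1_map gk j a = c"
  proof (rule extensionalityI[of _ "cv j"])
    show "nerve1_map gk j a \<in> extensional (cv j)" by (simp add: nerve1_map_def)
    show "c \<in> extensional (cv j)" by (rule ce)
    fix t assume "t \<in> cv j" then show "nerve1_map gk j a t = c t" using qa by (simp add: nerve1_map_def q_def)
  qed
  ultimately show ?thesis using ac by blast
qed



lemma lift_lemma:
  fixes L :: "'l graph" and M :: "'m graph" and \<phi> :: "'m \<Rightarrow> 'l"
  assumes x: "x \<in> cells (nerve1 L) m" and mn: "m \<le> n"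
      and dd: "graph_map (cube n) M dd" and eq: "\<forall>z\<in>cv n. restrict (x \<circ> drop (n - m)) (cv n) z = \<phi> (dd z)"
  shows "\<exists>b\<in>cells (sk n (nerve1 M)) m. x = nerve1_map \<phi> m b"
proof -
  define s where "s = (\<lambda>z::bool list. replicate (n - m) False @ z)"
  have bs: "box_mor0 m n s" using box_rep[of m "n - m"] mn unfolding s_def by simp
  have d1: "restrict dd (cv n) \<in> cells (nerve1 M) n"
    using gm_restrict[OF dd] by (simp add: cells_nerve)
  then have d2: "restrict dd (cv n) \<in> cells (sk n (nerve1 M)) n" by (rule sk_low[OF order_refl])
  define b where "b = act (nerve1 M) m n (restrict s (cv m)) (restrict dd (cv n))"
  have bsk: "b \<in> cells (sk n (nerve1 M)) m" unfolding b_def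
    by (rule sk_closed[OF boxhomI[OF bs] d2, simplified])
  have "x = nerve1_map \<phi> m b"
  proof (rule extensionalityI[of _ "cv m"])
    show "x \<in> extensional (cv m)" using x by (simp add: cells_nerve)
    show "nerve1_map \<phi> m b \<in> extensional (cv m)" by (simp add: nerve1_map_def)
    fix z assume z: "z \<in> cv m"
    have sz: "s z \<in> cv n" by (rule box_cv[OF bs z])
    have dz: "drop (n - m) (s z) = z" by (simp add: s_def)
    have "x z = restrict (x \<circ> drop (n - m)) (cv n) (s z)" using sz dz by simp
    also have "\<dots> = \<phi> (dd (s z))" using eq sz by blast
    finally have "x z = \<phi> (dd (s z))" .
    then show "x z = nerve1_map \<phi> m b z" using z sz by (simp add: nerve1_map_def b_def act_nerve)
  qed
  then show ?thesis using bsk by blast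
qed

lemma cover_lemma:
  fixes H :: "'h graph" and K :: "'k graph" and L :: "'l graph"
  assumes hl: "graph_map H L hl" and kl: "graph_map K L kl"
    and cover: "\<forall>c. graph_map (cube n) L c \<longrightarrow>
                  (\<exists>d. graph_map (cube n) H d \<and> (\<forall>x\<in>cv n. c x = hl (d x))) \<or>
                  (\<exists>d. graph_map (cube n) K d \<and> (\<forall>x\<in>cv n. c x = kl (d x)))"
    and d: "d \<in> cells (sk n (nerve1 L)) j"
  shows "(\<exists>b\<in>cells (sk n (nerve1 H)) j. d = nerve1_map hl j b) \<or>
         (\<exists>c\<in>cells (sk n (nerve1 K)) j. d = nerve1_map kl j c)"
proof -
  define S where "S j = {d. (\<exists>b\<in>cells (sk n (nerve1 H)) j. d = nerve1_map hl j b) \<or>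
         (\<exists>c\<in>cells (sk n (nerve1 K)) j. d = nerve1_map kl j c)}" for j
  have "sub_cset (nerve1 L) S"
    unfolding sub_cset_def
  proof (intro conjI allI impI subsetI)
    fix k x assume "x \<in> S k"
    then show "x \<in> cells (nerve1 L) k" unfolding S_def
      using nm_cells[OF hl sk_nerve_in] nm_cells[OF kl sk_nerve_in] by blast
  next
    fix k m f x assume f: "f \<in> boxhom k m" and x: "x \<in> S m"
    then consider (H) b where "b \<in> cells (sk n (nerve1 H)) m" "x = nerve1_map hl m b"
      | (K) c where "c \<in> cells (sk n (nerve1 K)) m" "x = nerve1_map kl m c"
      unfolding S_def by blast
    then show "act (nerve1 L) k m f x \<in> S k"
    proof cases
      case H
      then have "act (nerve1 L) k m f x = nerve1_map hl k (act (nerve1 H) k m f b)"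
        using nm_nat[OF f sk_nerve_in[OF H(1)], where \<phi>=hl and H=L] H(2) by simp
      moreover have "act (nerve1 H) k m f b \<in> cells (sk n (nerve1 H)) k"
        using sk_closed[OF f H(1)] by simp
      ultimately show ?thesis unfolding S_def by blast
    next
      case K
      then have "act (nerve1 L) k m f x = nerve1_map kl k (act (nerve1 K) k m f c)"
        using nm_nat[OF f sk_nerve_in[OF K(1)], where \<phi>=kl and H=L] K(2) by simp
      moreover have "act (nerve1 K) k m f c \<in> cells (sk n (nerve1 K)) k"
        using sk_closed[OF f K(1)] by simp
      ultimately show ?thesis unfolding S_def by blast
    qed
  qed
  moreover have "\<forall>m\<le>n. cells (nerve1 L) m \<subseteq> S m"
  proof (intro allI impI subsetI)
    fix m x assume mn: "m \<le> n" and x: "x \<in> cells (nerve1 L) m"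
    have bd: "box_mor0 n m (drop (n - m))" using box_drop[of "n - m" n] mn by simp
    have "restrict (x \<circ> drop (n - m)) (cv n) \<in> cells (nerve1 L) n" by (rule nerve_closed0[OF bd x])
    then have g: "graph_map (cube n) L (restrict (x \<circ> drop (n - m)) (cv n))" by (simp add: cells_nerve)
    from cover g consider
      (H) dd where "graph_map (cube n) H dd" "\<forall>z\<in>cv n. restrict (x \<circ> drop (n - m)) (cv n) z = hl (dd z)"
      | (K) dd where "graph_map (cube n) K dd" "\<forall>z\<in>cv n. restrict (x \<circ> drop (n - m)) (cv n) z = kl (dd z)"
      by blast
    then show "x \<in> S m"
    proof cases
      case H
      then show ?thesis using lift_lemma[OF x mn H(1) H(2)] unfolding S_def by blast
    next
      case K
      then show ?thesis using lift_lemma[OF x mn K(1) K(2)] unfolding S_def by blast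
    qed
  qed
  ultimately have "d \<in> S j" using sk_min d by blast
  then show ?thesis unfolding S_def by blast
qed



theorem lemma2p7:
  fixes n :: nat
    and G :: "'g graph" and H :: "'h graph" and K :: "'k graph" and L :: "'l graph"
    and gh :: "'g \<Rightarrow> 'h" and gk :: "'g \<Rightarrow> 'k" and hl :: "'h \<Rightarrow> 'l" and kl :: "'k \<Rightarrow> 'l"
  assumes graphs: "is_graph G" "is_graph H" "is_graph K" "is_graph L"
    and monic: "graph_mono G H gh" "graph_mono G K gk" "graph_mono H L hl" "graph_mono K L kl"
    and comm: "\<forall>x\<in>gverts G. hl (gh x) = kl (gk x)"
    and pb: "graph_is_pullback G H K L gh gk hl kl"
    and cover: "\<forall>c. graph_map (cube n) L c \<longrightarrow>
                  (\<exists>d. graph_map (cube n) H d \<and> (\<forall>x\<in>cv n. c x = hl (d x))) \<or>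
                  (\<exists>d. graph_map (cube n) K d \<and> (\<forall>x\<in>cv n. c x = kl (d x)))"
  shows "skeletal_pushout n G H K L gh gk hl kl TYPE('x)"
proof -
  have gm: "graph_map G H gh" "graph_map G K gk" "graph_map H L hl" "graph_map K L kl"
    using monic by (simp_all add: graph_mono_def)
  have ij: "inj_on hl (gverts H)" "inj_on kl (gverts K)"
    using monic by (simp_all add: graph_mono_def)
  let ?A = "sk n (nerve1 G)" and ?B = "sk n (nerve1 H)" and ?C = "sk n (nerve1 K)" and ?D = "sk n (nerve1 L)"
  let ?f = "nerve1_map gh" and ?g = "nerve1_map gk" and ?h = "nerve1_map hl" and ?k = "nerve1_map kl"
  have univ: "\<exists>w. cset_mor ?D X w \<and>
              (\<forall>j. \<forall>b\<in>cells ?B j. w j (?h j b) = u j b) \<and>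
              (\<forall>j. \<forall>c\<in>cells ?C j. w j (?k j c) = v j c) \<and>
              (\<forall>w'. cset_mor ?D X w' \<longrightarrow>
                    (\<forall>j. \<forall>b\<in>cells ?B j. w' j (?h j b) = u j b) \<longrightarrow>
                    (\<forall>j. \<forall>c\<in>cells ?C j. w' j (?k j c) = v j c) \<longrightarrow>
                    (\<forall>j. \<forall>d\<in>cells ?D j. w' j d = w j d))"
    if hu: "cset_mor ?B X u" and hv: "cset_mor ?C X v"
      and ag: "\<forall>j. \<forall>a\<in>cells ?A j. u j (?f j a) = v j (?g j a)"
    for X :: "'x cset" and u v
  proof -
    define w where "w j d = (if \<exists>b\<in>cells ?B j. d = ?h j b then u j (SOME b. b \<in> cells ?B j \<and> d = ?h j b)
                              else v j (SOME c. c \<in> cells ?C j \<and> d = ?k j c))" for j d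
    have WH: "w j (?h j b) = u j b" if b: "b \<in> cells ?B j" for j b
    proof -
      have ex: "\<exists>b'. b' \<in> cells ?B j \<and> ?h j b = ?h j b'" using b by blast
      define b' where "b' = (SOME b'. b' \<in> cells ?B j \<and> ?h j b = ?h j b')"
      have b': "b' \<in> cells ?B j \<and> ?h j b = ?h j b'" unfolding b'_def by (rule someI_ex[OF ex])
      then have "b' = b" using nm_inj[OF ij(1) sk_nerve_in sk_nerve_in] b by metis
      moreover have "w j (?h j b) = u j b'" unfolding w_def b'_def using b by auto
      ultimately show ?thesis by simp
    qed
    have WK: "w j (?k j c) = v j c" if c: "c \<in> cells ?C j" for j c
    proof (cases "\<exists>b\<in>cells ?B j. ?k j c = ?h j b")
      case True
      define b' where "b' = (SOME b. b \<in> cells ?B j \<and> ?k j c = ?h j b)"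
      have b': "b' \<in> cells ?B j \<and> ?k j c = ?h j b'" unfolding b'_def using True by (metis (mono_tags, lifting) someI_ex)
      have wk: "w j (?k j c) = u j b'" unfolding w_def b'_def using True by simp
      obtain a where a: "a \<in> cells (nerve1 G) j" "?f j a = b'" "?g j a = c"
        using pb_lift[OF pb sk_nerve_in sk_nerve_in, of b' n j c] b' c by metis
      have "a \<in> cells ?A j" using reflect[OF monic(1) a(1)] a(2) b' by simp
      then have "u j (?f j a) = v j (?g j a)" using ag by blast
      then show ?thesis using wk a by simp
    next
      case False
      define c' where "c' = (SOME c'. c' \<in> cells ?C j \<and> ?k j c = ?k j c')"
      have c': "c' \<in> cells ?C j \<and> ?k j c = ?k j c'" unfolding c'_def using c by (metis (mono_tags, lifting) someI_ex)
      then have "c' = c" using nm_inj[OF ij(2) sk_nerve_in sk_nerve_in] c by metis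
      moreover have "w j (?k j c) = v j c'" unfolding w_def c'_def using False by auto
      ultimately show ?thesis by simp
    qed
    have cov: "(\<exists>b\<in>cells ?B j. d = ?h j b) \<or> (\<exists>c\<in>cells ?C j. d = ?k j c)" if "d \<in> cells ?D j" for j d
      by (rule cover_lemma[OF gm(3) gm(4) cover that])
    have hu1: "\<forall>k. \<forall>x\<in>cells ?B k. u k x \<in> cells X k"
      and hu2: "\<forall>k m f x. f \<in> boxhom k m \<longrightarrow> x \<in> cells ?B m \<longrightarrow> u k (act ?B k m f x) = act X k m f (u m x)"
      using hu unfolding cset_mor_def by blast+
    have hv1: "\<forall>k. \<forall>x\<in>cells ?C k. v k x \<in> cells X k"
      and hv2: "\<forall>k m f x. f \<in> boxhom k m \<longrightarrow> x \<in> cells ?C m \<longrightarrow> v k (act ?C k m f x) = act X k m f (v m x)"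
      using hv unfolding cset_mor_def by blast+
    have wmor: "cset_mor ?D X w"
      unfolding cset_mor_def
    proof (intro conjI allI ballI impI)
      fix k d assume d: "d \<in> cells ?D k"
      from cov[OF d] show "w k d \<in> cells X k"
      proof
        assume "\<exists>b\<in>cells ?B k. d = ?h k b"
        then obtain b where b: "b \<in> cells ?B k" "d = ?h k b" by blast
        then show ?thesis using WH hu1 by simp
      next
        assume "\<exists>c\<in>cells ?C k. d = ?k k c"
        then obtain c where c: "c \<in> cells ?C k" "d = ?k k c" by blast
        then show ?thesis using WK hv1 by simp
      qed
    next
      fix k m f d assume f: "f \<in> boxhom k m" and d: "d \<in> cells ?D m"
      from cov[OF d] show "w k (act ?D k m f d) = act X k m f (w m d)"
      proof
        assume "\<exists>b\<in>cells ?B m. d = ?h m b"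
        then obtain b where b: "b \<in> cells ?B m" "d = ?h m b" by blast
        have e1: "act (nerve1 L) k m f d = ?h k (act (nerve1 H) k m f b)"
          using nm_nat[OF f sk_nerve_in[OF b(1)], where \<phi>=hl and H=L] b(2) by simp
        have e2: "act (nerve1 H) k m f b \<in> cells ?B k" by (rule sk_closed[OF f b(1)])
        have "w k (act ?D k m f d) = w k (?h k (act (nerve1 H) k m f b))" using e1 by simp
        also have "\<dots> = u k (act (nerve1 H) k m f b)" by (rule WH[OF e2])
        also have "\<dots> = act X k m f (u m b)" using hu2 f b(1) by simp
        also have "\<dots> = act X k m f (w m d)" using WH[OF b(1)] b(2) by simp
        finally show ?thesis .
      next
        assume "\<exists>c\<in>cells ?C m. d = ?k m c"
        then obtain c where c: "c \<in> cells ?C m" "d = ?k m c" by blast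
        have e1: "act (nerve1 L) k m f d = ?k k (act (nerve1 K) k m f c)"
          using nm_nat[OF f sk_nerve_in[OF c(1)], where \<phi>=kl and H=L] c(2) by simp
        have e2: "act (nerve1 K) k m f c \<in> cells ?C k" by (rule sk_closed[OF f c(1)])
        have "w k (act ?D k m f d) = w k (?k k (act (nerve1 K) k m f c))" using e1 by simp
        also have "\<dots> = v k (act (nerve1 K) k m f c)" by (rule WK[OF e2])
        also have "\<dots> = act X k m f (v m c)" using hv2 f c(1) by simp
        also have "\<dots> = act X k m f (w m d)" using WK[OF c(1)] c(2) by simp
        finally show ?thesis .
      qed
    qed
    show ?thesis
    proof (intro exI conjI allI ballI impI)
      show "cset_mor ?D X w" by (rule wmor)
    next
      fix j b assume "b \<in> cells ?B j" then show "w j (?h j b) = u j b" by (rule WH)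
    next
      fix j c assume "c \<in> cells ?C j" then show "w j (?k j c) = v j c" by (rule WK)
    next
      fix w' j d
      assume h1: "\<forall>j. \<forall>b\<in>cells ?B j. w' j (?h j b) = u j b"
        and h2: "\<forall>j. \<forall>c\<in>cells ?C j. w' j (?k j c) = v j c" and d: "d \<in> cells ?D j"
      from cov[OF d] show "w' j d = w j d"
      proof
        assume "\<exists>b\<in>cells ?B j. d = ?h j b"
        then obtain b where b: "b \<in> cells ?B j" "d = ?h j b" by blast
        then show ?thesis using h1 WH by simp
      next
        assume "\<exists>c\<in>cells ?C j. d = ?k j c"
        then obtain c where c: "c \<in> cells ?C j" "d = ?k j c" by blast
        then show ?thesis using h2 WK by simp
      qed
    qed
  qed
  show ?thesis
    unfolding skeletal_pushout_def cset_pushout_def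
  proof (intro conjI)
    show "cset_mor ?A ?B ?f" by (rule mor_sk[OF gm(1)])
    show "cset_mor ?A ?C ?g" by (rule mor_sk[OF gm(2)])
    show "cset_mor ?B ?D ?h" by (rule mor_sk[OF gm(3)])
    show "cset_mor ?C ?D ?k" by (rule mor_sk[OF gm(4)])
    show "\<forall>j. \<forall>a\<in>cells ?A j. ?h j (?f j a) = ?k j (?g j a)"
    proof (intro allI ballI)
      fix j a assume a: "a \<in> cells ?A j"
      show "?h j (?f j a) = ?k j (?g j a)"
        by (rule comp_nm[OF sk_nerve_in[OF a], where hl=hl and gh=gh and kl=kl and gk=gk, OF comm])
    qed
    show "\<forall>(X :: 'x cset) u v.
        cubical_set X \<longrightarrow> cset_mor ?B X u \<longrightarrow> cset_mor ?C X v \<longrightarrow>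
        (\<forall>j. \<forall>a\<in>cells ?A j. u j (?f j a) = v j (?g j a)) \<longrightarrow>
        (\<exists>w. cset_mor ?D X w \<and>
              (\<forall>j. \<forall>b\<in>cells ?B j. w j (?h j b) = u j b) \<and>
              (\<forall>j. \<forall>c\<in>cells ?C j. w j (?k j c) = v j c) \<and>
              (\<forall>w'. cset_mor ?D X w' \<longrightarrow>
                    (\<forall>j. \<forall>b\<in>cells ?B j. w' j (?h j b) = u j b) \<longrightarrow>
                    (\<forall>j. \<forall>c\<in>cells ?C j. w' j (?k j c) = v j c) \<longrightarrow>
                    (\<forall>j. \<forall>d\<in>cells ?D j. w' j d = w j d)))"
      using univ by blast
  qed
qed

end
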